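(* Let $r:E\to\mathbb R$ be continuous, bounded and non-negative, $\alpha_t=\int_0^t r(X_u)du$, and assume $\mu(f)<0$ and (L$_r$): for any $\delta,\varepsilon>0$ and compact $K\subset E$ there are $N>0$, $p>0$ such that for all $n\ge N$ and $x\in K$, $$\mathbb P^x\Big\{\Big|\frac{1}{\int_0^{n\delta}e^{-\alpha_s}ds}\int_0^{n\delta}e^{-\alpha_s}f(X_s)ds-\mu(f)\Big|>\varepsilon\Big\}\le e^{-pn\delta}.$$ Then for every $x$ there is $d(x)<0$ with $\gamma_r(x)=\sup_\tau\limsup_{T\to\infty}\mathbb E^x\{\int_0^{\tau\wedge T}e^{-\alpha_s}(f(X_s)-d(x))ds\}<\infty$, and $d$ can be chosen so that $M(x)=\frac{\gamma_r(x)+2\|g\|+1}{-d(x)}$ is bounded on compact subsets of $E$.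
   Context: $E$ is a locally compact separable metric space in which every closed ball is compact. $(X_t)$ is a right-continuous time-homogeneous (standard) Markov process on $E$ with laws $\mathbb P^x$, expectations $\mathbb E^x$, satisfying the weak Feller property and ergodicity (a unique probability measure $\mu$ with $\|P_t(x,\cdot)-\mu\|_{TV}\to0$ for all $x$); $\mu(f)=\int f\,d\mu$. $f,g$ are continuous and bounded, $\|\cdot\|$ the sup norm. Stopping times may be infinite. *)

theory Defs
  imports "HOL-Probability.Probability"
begin

text \<open>Time is real, only t >= 0 is relevant. The process lives on a
measurable space Omega with a filtration F (real-indexed), a family of laws P x
(one probability measure per starting point x, all on the sigma-algebra of Omega),
and paths X t omega with values in the state space 'e (with its Borel sigma-algebra).\<close>

definition filtration_on :: "'o measure \<Rightarrow> (real \<Rightarrow> 'o measure) \<Rightarrow> bool" where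
  "filtration_on \<Omega> F \<longleftrightarrow>
     (\<forall>t\<ge>0. space (F t) = space \<Omega> \<and> sets (F t) \<subseteq> sets \<Omega>) \<and>
     (\<forall>s t. 0 \<le> s \<and> s \<le> t \<longrightarrow> sets (F s) \<subseteq> sets (F t))"

definition stopping_time_inf :: "'o measure \<Rightarrow> (real \<Rightarrow> 'o measure) \<Rightarrow> ('o \<Rightarrow> ennreal) \<Rightarrow> bool" where
  "stopping_time_inf \<Omega> F \<tau> \<longleftrightarrow>
     (\<forall>t\<ge>0. {\<omega> \<in> space \<Omega>. \<tau> \<omega> \<le> ennreal t} \<in> sets (F t))"

definition pre_tau_sets :: "'o measure \<Rightarrow> (real \<Rightarrow> 'o measure) \<Rightarrow> ('o \<Rightarrow> ennreal) \<Rightarrow> 'o set set" where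
  "pre_tau_sets \<Omega> F \<tau> =
     {B \<in> sets \<Omega>. \<forall>t\<ge>0. B \<inter> {\<omega> \<in> space \<Omega>. \<tau> \<omega> \<le> ennreal t} \<in> sets (F t)}"

definition trans_op :: "('e \<Rightarrow> 'o measure) \<Rightarrow> (real \<Rightarrow> 'o \<Rightarrow> 'e) \<Rightarrow> real \<Rightarrow> ('e \<Rightarrow> real) \<Rightarrow> 'e \<Rightarrow> real" where
  "trans_op P X s h y = (\<integral>\<omega>. h (X s \<omega>) \<partial>P y)"

definition trans_prob :: "('e \<Rightarrow> 'o measure) \<Rightarrow> (real \<Rightarrow> 'o \<Rightarrow> 'e) \<Rightarrow> real \<Rightarrow> 'e \<Rightarrow> 'e set \<Rightarrow> real" where
  "trans_prob P X t x A = measure (P x) {\<omega> \<in> space (P x). X t \<omega> \<in> A}"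

text \<open>Right-continuous (with left limits), time-homogeneous, strong Markov,
quasi-left-continuous (i.e. standard) Markov process with respect to the filtration F.\<close>
definition standard_markov ::
  "'o measure \<Rightarrow> (real \<Rightarrow> 'o measure) \<Rightarrow> ('e::topological_space \<Rightarrow> 'o measure) \<Rightarrow> (real \<Rightarrow> 'o \<Rightarrow> 'e) \<Rightarrow> bool" where
  "standard_markov \<Omega> F P X \<longleftrightarrow>
     filtration_on \<Omega> F \<and>
     (\<forall>x. prob_space (P x) \<and> sets (P x) = sets \<Omega>) \<and>
     (\<forall>t\<ge>0. X t \<in> measurable (F t) borel) \<and>
     (\<forall>x. AE \<omega> in P x. X 0 \<omega> = x) \<and>
     (\<forall>\<omega>\<in>space \<Omega>. \<forall>t\<ge>0. continuous (at_right t) (\<lambda>s. X s \<omega>)) \<and>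
     (\<forall>\<omega>\<in>space \<Omega>. \<forall>t>0. \<exists>l. ((\<lambda>s. X s \<omega>) \<longlongrightarrow> l) (at_left t)) \<and>
     (\<forall>t\<ge>0. \<forall>A\<in>sets borel. (\<lambda>x. trans_prob P X t x A) \<in> borel_measurable borel) \<and>
     (\<forall>x \<tau> B s h. stopping_time_inf \<Omega> F \<tau> \<and> B \<in> pre_tau_sets \<Omega> F \<tau> \<and> s \<ge> 0 \<and>
         h \<in> borel_measurable borel \<and> bounded (range h) \<longrightarrow>
        (\<integral>\<omega>. indicator (B \<inter> {\<omega>. \<tau> \<omega> < \<infinity>}) \<omega> * h (X (enn2real (\<tau> \<omega>) + s) \<omega>) \<partial>P x) =
        (\<integral>\<omega>. indicator (B \<inter> {\<omega>. \<tau> \<omega> < \<infinity>}) \<omega> * trans_op P X s h (X (enn2real (\<tau> \<omega>)) \<omega>) \<partial>P x)) \<and>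
     (\<forall>x \<sigma> \<tau>. (\<forall>n. stopping_time_inf \<Omega> F (\<sigma> n)) \<and> stopping_time_inf \<Omega> F \<tau> \<and>
         (\<forall>\<omega>\<in>space \<Omega>. incseq (\<lambda>n. \<sigma> n \<omega>) \<and> (\<lambda>n. \<sigma> n \<omega>) \<longlonglongrightarrow> \<tau> \<omega>) \<longrightarrow>
        (AE \<omega> in P x. \<tau> \<omega> < \<infinity> \<longrightarrow>
            (\<lambda>n. X (enn2real (\<sigma> n \<omega>)) \<omega>) \<longlonglongrightarrow> X (enn2real (\<tau> \<omega>)) \<omega>))"

definition weak_feller :: "('e::topological_space \<Rightarrow> 'o measure) \<Rightarrow> (real \<Rightarrow> 'o \<Rightarrow> 'e) \<Rightarrow> bool" where
  "weak_feller P X \<longleftrightarrow>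
     (\<forall>h t. continuous_on UNIV h \<and> bounded (range (h :: 'e \<Rightarrow> real)) \<and> t \<ge> 0 \<longrightarrow>
        continuous_on UNIV (trans_op P X t h))"

definition tv_dist :: "('e::topological_space \<Rightarrow> 'o measure) \<Rightarrow> (real \<Rightarrow> 'o \<Rightarrow> 'e) \<Rightarrow> real \<Rightarrow> 'e \<Rightarrow> 'e measure \<Rightarrow> real" where
  "tv_dist P X t x \<mu> = (SUP A\<in>sets borel. \<bar>trans_prob P X t x A - measure \<mu> A\<bar>)"

definition ergodic :: "('e::topological_space \<Rightarrow> 'o measure) \<Rightarrow> (real \<Rightarrow> 'o \<Rightarrow> 'e) \<Rightarrow> 'e measure \<Rightarrow> bool" where
  "ergodic P X \<mu> \<longleftrightarrow> prob_space \<mu> \<and> sets \<mu> = sets borel \<and>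
     (\<forall>x. ((\<lambda>t. tv_dist P X t x \<mu>) \<longlongrightarrow> 0) at_top)"

definition alpha :: "('e \<Rightarrow> real) \<Rightarrow> (real \<Rightarrow> 'o \<Rightarrow> 'e) \<Rightarrow> 'o \<Rightarrow> real \<Rightarrow> real" where
  "alpha r X \<omega> t = (LINT u:{0..t}|lborel. r (X u \<omega>))"

definition gamma_r ::
  "'o measure \<Rightarrow> (real \<Rightarrow> 'o measure) \<Rightarrow> ('e \<Rightarrow> 'o measure) \<Rightarrow> (real \<Rightarrow> 'o \<Rightarrow> 'e) \<Rightarrow>
   ('e \<Rightarrow> real) \<Rightarrow> ('e \<Rightarrow> real) \<Rightarrow> real \<Rightarrow> 'e \<Rightarrow> ereal" where
  "gamma_r \<Omega> F P X r f c x =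
     (SUP \<tau>\<in>{\<tau>. stopping_time_inf \<Omega> F \<tau>}.
        Limsup at_top (\<lambda>T::real. ereal (\<integral>\<omega>.
           (LINT s:{0..enn2real (min (\<tau> \<omega>) (ennreal T))}|lborel.
               exp (- alpha r X \<omega> s) * (f (X s \<omega>) - c)) \<partial>P x)))"

definition supnorm :: "('e \<Rightarrow> real) \<Rightarrow> real" where
  "supnorm g = (SUP y. \<bar>g y\<bar>)"

end

theory Submission
  imports Defs
begin


lemma rc_seq:
  fixes g :: "real \<Rightarrow> 'e::metric_space"
  assumes rc: "continuous (at_right t) g" and q: "q \<longlonglongrightarrow> t" and ge: "\<And>n. q n \<ge> t"
  shows "(\<lambda>n. g (q n)) \<longlonglongrightarrow> g t"
proof (rule metric_LIMSEQ_I)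
  fix e :: real assume e: "e > 0"
  from rc e obtain d where d: "d > 0" "\<And>y. y \<in> {t<..} \<Longrightarrow> dist y t < d \<Longrightarrow> dist (g y) (g t) < e"
    unfolding continuous_within_eps_delta by blast
  from metric_LIMSEQ_D[OF q d(1)] obtain N where N: "\<And>n. n \<ge> N \<Longrightarrow> dist (q n) t < d" by blast
  show "\<exists>N. \<forall>n\<ge>N. dist (g (q n)) (g t) < e"
  proof (intro exI allI impI)
    fix n assume "n \<ge> N"
    show "dist (g (q n)) (g t) < e"
    proof (cases "q n = t")
      case True then show ?thesis using e by simp
    next
      case False then have "q n \<in> {t<..}" using ge[of n] by auto
      then show ?thesis using d(2) N[OF \<open>n \<ge> N\<close>] by blast
    qed
  qed
qed

lemma X_joint_meas:
  fixes X :: "real \<Rightarrow> 'o \<Rightarrow> 'e::metric_space"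
  assumes meas: "\<And>t. t \<ge> 0 \<Longrightarrow> X t \<in> borel_measurable M"
    and rc: "\<And>\<omega> t. \<omega> \<in> space M \<Longrightarrow> t \<ge> 0 \<Longrightarrow> continuous (at_right t) (\<lambda>s. X s \<omega>)"
  shows "(\<lambda>(\<omega>,s). X (max 0 s) \<omega>) \<in> borel_measurable (M \<Otimes>\<^sub>M lborel)"
proof (rule borel_measurable_LIMSEQ_metric)
  fix n :: nat
  show "(\<lambda>(\<omega>,s). X (max 0 (real_of_int \<lceil>(2::real)^n * s\<rceil> / 2^n)) \<omega>) \<in> borel_measurable (M \<Otimes>\<^sub>M lborel)"
  proof -
    have "(\<lambda>z. X (max 0 (real_of_int \<lceil>(2::real)^n * snd z\<rceil> / 2^n)) (fst z)) \<in> borel_measurable (M \<Otimes>\<^sub>M lborel)"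
    proof (rule measurable_compose_countable[where f="\<lambda>i z. X (max 0 (real_of_int i / 2^n)) (fst z)" and g="\<lambda>z. \<lceil>(2::real)^n * snd z\<rceil>"])
      fix i :: int
      show "(\<lambda>z. X (max 0 (real_of_int i / 2^n)) (fst z)) \<in> borel_measurable (M \<Otimes>\<^sub>M lborel)"
        using measurable_compose[OF measurable_fst meas[of "max 0 (real_of_int i / 2^n)"]] by simp
    next
      show "(\<lambda>z. \<lceil>(2::real)^n * snd z\<rceil>) \<in> measurable (M \<Otimes>\<^sub>M lborel) (count_space UNIV)"
        by measurable
    qed
    then show ?thesis by (simp add: case_prod_beta')
  qed
next
  fix z :: "'o \<times> real" assume z: "z \<in> space (M \<Otimes>\<^sub>M lborel)"
  obtain \<omega> s where zz: "z = (\<omega>, s)" by (cases z)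
  with z have om: "\<omega> \<in> space M" by (simp add: space_pair_measure)
  show "(\<lambda>n. (\<lambda>(\<omega>,s). X (max 0 (real_of_int \<lceil>(2::real)^n * s\<rceil> / 2^n)) \<omega>) z) \<longlonglongrightarrow> (\<lambda>(\<omega>,s). X (max 0 s) \<omega>) z"
  proof (cases "s \<ge> 0")
    case False
    then have "\<And>n::nat. max 0 (real_of_int \<lceil>(2::real)^n * s\<rceil> / 2^n) = 0"
    proof -
      fix n :: nat
      have "2^n * s \<le> 0" using False by (simp add: mult_nonneg_nonpos)
      then have "\<lceil>(2::real)^n * s\<rceil> \<le> 0" by (simp add: ceiling_le_iff)
      then show "max 0 (real_of_int \<lceil>(2::real)^n * s\<rceil> / 2^n) = 0" by (simp add: divide_nonpos_pos)
    qed
    then show ?thesis using False zz by simp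
  next
    case True
    define q where "q = (\<lambda>n::nat. real_of_int \<lceil>(2::real)^n * s\<rceil> / 2^n)"
    have ge: "q n \<ge> s" for n
      unfolding q_def by (simp add: pos_le_divide_eq mult.commute)
    have le: "q n \<le> s + 1 / 2^n" for n
    proof -
      have *: "real_of_int \<lceil>(2::real)^n * s\<rceil> \<le> 2^n * s + 1" by linarith
      have "q n \<le> (2^n * s + 1) / 2^n" unfolding q_def by (rule divide_right_mono[OF *]) simp
      also have "\<dots> = s + 1 / 2^n" by (simp add: field_simps)
      finally show ?thesis .
    qed
    have "(\<lambda>n. s + 1 / 2^n) \<longlonglongrightarrow> s + 0"
      by (intro tendsto_add tendsto_const LIMSEQ_divide_realpow_zero) auto
    then have h: "(\<lambda>n. s + 1 / 2^n) \<longlonglongrightarrow> s" by simp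
    have qt: "q \<longlonglongrightarrow> s"
    proof (rule real_tendsto_sandwich[where f="\<lambda>_. s" and h="\<lambda>n. s + 1/2^n"])
      show "\<forall>\<^sub>F n in sequentially. s \<le> q n" by (rule always_eventually) (rule allI, rule ge)
      show "\<forall>\<^sub>F n in sequentially. q n \<le> s + 1/2^n" by (rule always_eventually) (rule allI, rule le)
      show "(\<lambda>_. s) \<longlonglongrightarrow> s" by (rule tendsto_const)
      show "(\<lambda>n. s + 1 / 2^n) \<longlonglongrightarrow> s" by (rule h)
    qed
    have "(\<lambda>n. X (q n) \<omega>) \<longlonglongrightarrow> X s \<omega>"
      using rc_seq[where g="\<lambda>s. X s \<omega>", OF rc[OF om True] qt ge] by simp
    moreover have "max 0 (q n) = q n" for n using ge[of n] True by simp
    ultimately show ?thesis using True zz unfolding q_def by simp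
  qed
qed


lemma fin_Icc: "emeasure lborel {a..b::real} < \<top>" by (simp add: emeasure_lborel_Icc_eq)
lemma fin_Ioc: "emeasure lborel {a<..b::real} < \<top>"
proof -
  have "emeasure lborel {a<..b} \<le> emeasure lborel {a..b}" by (rule emeasure_mono) auto
  then show ?thesis using fin_Icc[of a b] by (rule le_less_trans)
qed

lemma si_bounded:
  fixes h :: "real \<Rightarrow> real"
  assumes hm: "h \<in> borel_measurable lborel" and hb: "\<And>s. \<bar>h s\<bar> \<le> C"
    and A: "A \<in> sets lborel" "emeasure lborel A < \<infinity>"
  shows "set_integrable lborel A h"
  unfolding set_integrable_def
  by (rule integrableI_bounded_set_indicator[where B=C]) (use hm hb A in auto)

lemma Z_le_Ct:
  fixes h :: "real \<Rightarrow> real"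
  assumes hm: "h \<in> borel_measurable lborel" and hb: "\<And>s. \<bar>h s\<bar> \<le> C"
    and a: "a \<le> b"
  shows "(LINT s:{a..b}|lborel. h s) \<le> C * (b - a)" "(LINT s:{a<..b}|lborel. h s) \<le> C * (b - a)"
proof -
  have "(LINT s:{a..b}|lborel. h s) \<le> (LINT s:{a..b}|lborel. C)"
    by (rule set_integral_mono[OF si_bounded[OF hm hb] si_bounded[where C="\<bar>C\<bar>"]])
       (use hb abs_le_D1 fin_Icc fin_Ioc in auto)
  also have "\<dots> = C * (b - a)" using a by (subst set_integral_const) auto
  finally show "(LINT s:{a..b}|lborel. h s) \<le> C * (b - a)" .
  have "(LINT s:{a<..b}|lborel. h s) \<le> (LINT s:{a<..b}|lborel. C)"
    by (rule set_integral_mono[OF si_bounded[OF hm hb] si_bounded[where C="\<bar>C\<bar>"]])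
       (use hb abs_le_D1 fin_Icc fin_Ioc in auto)
  also have "\<dots> = C * (b - a)" using a by (subst set_integral_const) auto
  finally show "(LINT s:{a<..b}|lborel. h s) \<le> C * (b - a)" .
qed

lemma Z_step:
  fixes h :: "real \<Rightarrow> real"
  assumes hm: "h \<in> borel_measurable lborel" and hb: "\<And>s. \<bar>h s\<bar> \<le> C"
    and n: "0 \<le> n" "n \<le> t" "t \<le> n + 1"
  shows "(LINT s:{0..t}|lborel. h s) \<le> (LINT s:{0..n}|lborel. h s) + C"
proof -
  have C0: "0 \<le> C" using hb[of 0] by linarith
  have eq: "{0..t} = {0..n} \<union> {n<..t}" using n by auto
  have "(LINT s:{0..t}|lborel. h s) = (LINT s:{0..n} \<union> {n<..t}|lborel. h s)" by (simp only: eq)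
  also have "\<dots> = (LINT s:{0..n}|lborel. h s) + (LINT s:{n<..t}|lborel. h s)"
    by (rule set_integral_Un) (auto intro!: si_bounded[OF hm hb] fin_Icc fin_Ioc)
  also have "(LINT s:{n<..t}|lborel. h s) \<le> C * (t - n)" using Z_le_Ct(2)[OF hm hb n(2)] .
  also have "C * (t - n) \<le> C" using C0 n by (simp add: mult_left_le)
  finally show ?thesis by simp
qed

lemma good_le:
  fixes e \<phi> :: "real \<Rightarrow> real"
  assumes em: "e \<in> borel_measurable lborel" and \<phi>m: "\<phi> \<in> borel_measurable lborel"
    and e01: "\<And>s. 0 \<le> e s \<and> e s \<le> 1" and \<phi>b: "\<And>s. \<bar>\<phi> s\<bar> \<le> Cf"
    and mu: "mu < 0"
    and good: "\<not> (\<bar>(1 / (LINT s:{0..b}|lborel. e s)) * (LINT s:{0..b}|lborel. e s * \<phi> s) - mu\<bar> > - mu / 2)"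
  shows "(LINT s:{0..b}|lborel. e s * (\<phi> s - mu / 2)) \<le> 0"
proof -
  define A where "A = (LINT s:{0..b}|lborel. e s)"
  define B where "B = (LINT s:{0..b}|lborel. e s * \<phi> s)"
  have ie: "set_integrable lborel {0..b} e"
    by (rule si_bounded[OF em, where C=1]) (use e01 fin_Icc in auto)
  have ieph: "set_integrable lborel {0..b} (\<lambda>s. e s * \<phi> s)"
  proof (rule si_bounded[where C=Cf])
    show "(\<lambda>s. e s * \<phi> s) \<in> borel_measurable lborel" using em \<phi>m by measurable
    fix s
    have "\<bar>e s * \<phi> s\<bar> = e s * \<bar>\<phi> s\<bar>" using e01[of s] by (simp add: abs_mult)
    also have "\<dots> \<le> 1 * Cf" using e01[of s] \<phi>b[of s] by (intro mult_mono) auto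
    finally show "\<bar>e s * \<phi> s\<bar> \<le> Cf" by simp
  qed (auto simp: fin_Icc)
  have A0: "A \<ge> 0" unfolding A_def set_lebesgue_integral_def
    by (rule integral_nonneg_AE) (use e01 in \<open>auto simp: indicator_def\<close>)
  have "A \<noteq> 0"
  proof
    assume "A = 0"
    then show False using good mu unfolding A_def[symmetric] by simp
  qed
  with A0 have Ap: "A > 0" by simp
  from good have "B / A - mu \<le> - mu / 2" unfolding A_def[symmetric] B_def[symmetric] by simp
  then have "B / A \<le> mu / 2" by linarith
  then have BA: "B \<le> mu / 2 * A" using Ap by (simp add: divide_le_eq)
  have "(LINT s:{0..b}|lborel. e s * (\<phi> s - mu / 2)) = (LINT s:{0..b}|lborel. e s * \<phi> s - mu / 2 * e s)"
    by (simp add: algebra_simps)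
  also have "\<dots> = B - mu / 2 * A"
    unfolding A_def B_def using ie ieph by (simp add: set_integral_mult_right)
  finally show ?thesis using BA by simp
qed



lemma set_int_cong_Icc:
  fixes f g :: "real \<Rightarrow> real"
  assumes "\<And>s. 0 \<le> s \<Longrightarrow> s \<le> t \<Longrightarrow> f s = g s"
  shows "(LINT s:{0..t}|lborel. f s) = (LINT s:{0..t}|lborel. g s)"
  unfolding set_lebesgue_integral_def
  by (rule Bochner_Integration.integral_cong) (use assms in \<open>auto simp: indicator_def\<close>)

lemma meas_setup:
  fixes \<Omega> :: "'o measure" and X :: "real \<Rightarrow> 'o \<Rightarrow> 'e::metric_space" and r f :: "'e \<Rightarrow> real"
  assumes XJ: "(\<lambda>(\<omega>,s). X (max 0 s) \<omega>) \<in> borel_measurable (\<Omega> \<Otimes>\<^sub>M lborel)"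
    and r_cont: "continuous_on UNIV r" and f_cont: "continuous_on UNIV f"
  defines "al \<equiv> \<lambda>\<omega> s. (\<integral>u. indicator {0..s} u * r (X (max 0 u) \<omega>) \<partial>lborel)"
  shows "\<And>\<omega> s. alpha r X \<omega> s = al \<omega> s"
    and "(\<lambda>z. f (X (max 0 (snd z)) (fst z))) \<in> borel_measurable (\<Omega> \<Otimes>\<^sub>M lborel)"
    and "(\<lambda>z. al (fst z) (snd z)) \<in> borel_measurable (\<Omega> \<Otimes>\<^sub>M lborel)"
proof -
  fix \<omega> s show "alpha r X \<omega> s = al \<omega> s"
    unfolding alpha_def al_def set_lebesgue_integral_def
    by (rule Bochner_Integration.integral_cong) (auto simp: indicator_def)
next
  have h: "(\<lambda>z. h (X (max 0 (snd z)) (fst z))) \<in> borel_measurable (\<Omega> \<Otimes>\<^sub>M lborel)"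
    if "continuous_on UNIV h" for h :: "'e \<Rightarrow> real"
    using measurable_compose[OF XJ borel_measurable_continuous_onI[OF that]]
    by (simp add: case_prod_beta')
  show "(\<lambda>z. f (X (max 0 (snd z)) (fst z))) \<in> borel_measurable (\<Omega> \<Otimes>\<^sub>M lborel)"
    by (rule h[OF f_cont])
  have rJ[measurable]: "(\<lambda>z. r (X (max 0 (snd z)) (fst z))) \<in> borel_measurable (\<Omega> \<Otimes>\<^sub>M lborel)"
    by (rule h[OF r_cont])
  have m1: "(\<lambda>z::('o \<times> real) \<times> real. (fst (fst z), snd z)) \<in> measurable ((\<Omega> \<Otimes>\<^sub>M lborel) \<Otimes>\<^sub>M lborel) (\<Omega> \<Otimes>\<^sub>M lborel)"
    by measurable
  have m2: "(\<lambda>z::('o \<times> real) \<times> real. r (X (max 0 (snd z)) (fst (fst z)))) \<in> borel_measurable ((\<Omega> \<Otimes>\<^sub>M lborel) \<Otimes>\<^sub>M lborel)"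
    using measurable_compose[OF m1 rJ] by simp
  have m3: "(\<lambda>z::('o \<times> real) \<times> real. indicator {0..snd (fst z)} (snd z) :: real) \<in> borel_measurable ((\<Omega> \<Otimes>\<^sub>M lborel) \<Otimes>\<^sub>M lborel)"
  proof -
    have "(\<lambda>z::('o \<times> real) \<times> real. indicator {0..snd (fst z)} (snd z) :: real) = (\<lambda>z. if 0 \<le> snd z \<and> snd z \<le> snd (fst z) then 1 else 0)"
      by (auto simp: indicator_def fun_eq_iff)
    also have "\<dots> \<in> borel_measurable ((\<Omega> \<Otimes>\<^sub>M lborel) \<Otimes>\<^sub>M lborel)" by measurable
    finally show ?thesis .
  qed
  have "case_prod (\<lambda>z u. indicator {0..snd z} u * r (X (max 0 u) (fst z))) \<in> borel_measurable ((\<Omega> \<Otimes>\<^sub>M lborel) \<Otimes>\<^sub>M lborel)"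
    using borel_measurable_times[OF m3 m2] by (simp add: case_prod_beta')
  from lborel.borel_measurable_lebesgue_integral[OF this]
  show "(\<lambda>z. al (fst z) (snd z)) \<in> borel_measurable (\<Omega> \<Otimes>\<^sub>M lborel)"
    unfolding al_def by simp
qed



lemma omega_bound:
  fixes al :: "'o \<Rightarrow> real \<Rightarrow> real" and X :: "real \<Rightarrow> 'o \<Rightarrow> 'e" and f r :: "'e \<Rightarrow> real"
  assumes alJ: "(\<lambda>z. al (fst z) (snd z)) \<in> borel_measurable (\<Omega> \<Otimes>\<^sub>M lborel)"
    and fJ: "(\<lambda>z. f (X (max 0 (snd z)) (fst z))) \<in> borel_measurable (\<Omega> \<Otimes>\<^sub>M lborel)"
    and aleq: "\<And>\<omega> s. alpha r X \<omega> s = al \<omega> s"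
    and al0: "\<And>\<omega> s. al \<omega> s \<ge> 0"
    and Cf: "\<And>y. \<bar>f y\<bar> \<le> Cf"
    and mu: "mu < 0"
    and om: "\<omega> \<in> space \<Omega>"
    and t: "0 \<le> t" and m: "nat \<lfloor>t\<rfloor> \<le> m" and N: "0 < N"
    and bad_def: "bad = (\<lambda>n::nat. {\<omega> \<in> space \<Omega>. \<bar>(1 / (LINT s:{0..real n * 1}|lborel. exp (- alpha r X \<omega> s))) *
                          (LINT s:{0..real n * 1}|lborel. exp (- alpha r X \<omega> s) * f (X s \<omega>)) - mu\<bar> > - mu / 2})"
  shows "(LINT s:{0..t}|lborel. exp (- alpha r X \<omega> s) * (f (X s \<omega>) - mu / 2))
      \<le> (Cf + \<bar>mu / 2\<bar>) * (real N + 1) + (Cf + \<bar>mu / 2\<bar>) * (\<Sum>n\<in>{N..m}. (real n + 1) * indicator (bad n) \<omega>)"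
proof -
  define C where "C = Cf + \<bar>mu / 2\<bar>"
  define e where "e = (\<lambda>s. exp (- al \<omega> s))"
  define \<phi> where "\<phi> = (\<lambda>s. f (X (max 0 s) \<omega>))"
  define h where "h = (\<lambda>s. e s * (\<phi> s - mu / 2))"
  have alm: "(\<lambda>s. al \<omega> s) \<in> borel_measurable lborel"
    using measurable_Pair2[OF alJ om] by simp
  have em: "e \<in> borel_measurable lborel" unfolding e_def using alm by measurable
  have \<phi>m: "\<phi> \<in> borel_measurable lborel" unfolding \<phi>_def using measurable_Pair2[OF fJ om] by simp
  have hm: "h \<in> borel_measurable lborel" unfolding h_def using em \<phi>m by measurable
  have e01: "0 \<le> e s \<and> e s \<le> 1" for s unfolding e_def using al0[of \<omega> s] by auto
  have \<phi>b: "\<bar>\<phi> s\<bar> \<le> Cf" for s unfolding \<phi>_def by (rule Cf)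
  have hb: "\<bar>h s\<bar> \<le> C" for s
  proof -
    have "\<bar>h s\<bar> = e s * \<bar>\<phi> s - mu / 2\<bar>" unfolding h_def using e01[of s] by (simp add: abs_mult)
    also have "\<dots> \<le> 1 * C" unfolding C_def using e01[of s] \<phi>b[of s]
      by (intro mult_mono) (auto simp: abs_triangle_ineq4 intro: order_trans[OF abs_triangle_ineq4])
    finally show ?thesis by simp
  qed
  have C0: "0 \<le> C" using hb[of 0] by linarith
  have Zeq: "(LINT s:{0..b}|lborel. exp (- alpha r X \<omega> s) * (f (X s \<omega>) - mu / 2)) = (LINT s:{0..b}|lborel. h s)" for b
    by (rule set_int_cong_Icc) (simp add: h_def e_def \<phi>_def aleq)
  have sum0: "0 \<le> (\<Sum>n\<in>{N..m}. (real n + 1) * indicator (bad n) \<omega>)"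
    by (intro sum_nonneg) auto
  define k where "k = nat \<lfloor>t\<rfloor>"
  have k: "real k \<le> t" "t < real k + 1" unfolding k_def using t by linarith+
  have km: "k \<le> m" unfolding k_def using m .
  have "(LINT s:{0..t}|lborel. h s) \<le> C * (real N + 1) + C * (\<Sum>n\<in>{N..m}. (real n + 1) * indicator (bad n) \<omega>)"
  proof (cases "k < N")
    case True
    have "(LINT s:{0..t}|lborel. h s) \<le> C * (t - 0)" by (rule Z_le_Ct(1)[OF hm hb t])
    also have "\<dots> \<le> C * (real N + 1)" using k True C0 by (intro mult_left_mono) auto
    finally show ?thesis using sum0 C0 by (smt (verit) mult_nonneg_nonneg)
  next
    case False
    show ?thesis
    proof (cases "\<omega> \<in> bad k")
      case True
      have "(LINT s:{0..t}|lborel. h s) \<le> C * (t - 0)" by (rule Z_le_Ct(1)[OF hm hb t])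
      also have "\<dots> \<le> C * (real k + 1)" using k C0 by (intro mult_left_mono) auto
      also have "real k + 1 = (real k + 1) * indicator (bad k) \<omega>" using True by simp
      also have "\<dots> \<le> (\<Sum>n\<in>{N..m}. (real n + 1) * indicator (bad n) \<omega>)"
        by (rule member_le_sum[where f="\<lambda>n. (real n + 1) * indicator (bad n) \<omega>"]) (use False km in auto)
      finally have "(LINT s:{0..t}|lborel. h s) \<le> C * (\<Sum>n\<in>{N..m}. (real n + 1) * indicator (bad n) \<omega>)"
        using C0 by (simp add: mult_left_mono)
      then show ?thesis using C0 by (smt (verit) mult_nonneg_nonneg of_nat_0_le_iff)
    next
      case nb: False
      have good: "\<not> (\<bar>(1 / (LINT s:{0..real k}|lborel. e s)) * (LINT s:{0..real k}|lborel. e s * \<phi> s) - mu\<bar> > - mu / 2)"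
      proof -
        have e1: "(LINT s:{0..real k}|lborel. e s) = (LINT s:{0..real k * 1}|lborel. exp (- alpha r X \<omega> s))"
          by simp (rule set_int_cong_Icc, simp add: e_def aleq)
        have e2: "(LINT s:{0..real k}|lborel. e s * \<phi> s) = (LINT s:{0..real k * 1}|lborel. exp (- alpha r X \<omega> s) * f (X s \<omega>))"
          by simp (rule set_int_cong_Icc, simp add: e_def \<phi>_def aleq)
        show ?thesis using nb om unfolding e1 e2 bad_def by simp
      qed
      have Zk: "(LINT s:{0..real k}|lborel. h s) \<le> 0"
        unfolding h_def by (rule good_le[OF em \<phi>m e01 \<phi>b mu good])
      have "(LINT s:{0..t}|lborel. h s) \<le> (LINT s:{0..real k}|lborel. h s) + C"
        by (rule Z_step[OF hm hb]) (use k in auto)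
      also have "\<dots> \<le> C * (real N + 1)" using Zk C0 by (smt (verit) mult_left_mono of_nat_0_le_iff mult_cancel_left1)
      finally show ?thesis using sum0 C0 by (smt (verit) mult_nonneg_nonneg)
    qed
  qed
  then show ?thesis unfolding Zeq C_def .
qed



lemma geo_bound:
  fixes p :: real assumes p: "p > 0"
  defines "c \<equiv> min 1 (p / 2)"
  shows "(real n + 1) * exp (- p * real n * 1) \<le> (1 / c) * exp (- (p / 2)) ^ n"
proof -
  have c: "0 < c" "c \<le> 1" "c \<le> p / 2" using p unfolding c_def by auto
  have "c * (real n + 1) \<le> 1 + p / 2 * real n"
  proof -
    have "c * real n \<le> p / 2 * real n" using c by (intro mult_right_mono) auto
    then show ?thesis using c by (simp add: distrib_left)
  qed
  also have "\<dots> \<le> exp (p / 2 * real n)" by (rule exp_ge_add_one_self)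
  finally have *: "c * (real n + 1) \<le> exp (p / 2 * real n)" .
  have eq1: "exp (- (p / 2)) ^ n = exp (- (p / 2) * real n)" by (simp add: exp_of_nat_mult[symmetric] mult.commute)
  have eq2: "exp (- p * real n * 1) = exp (- (p / 2) * real n) * exp (- (p / 2) * real n)"
    by (simp add: exp_add[symmetric])
  have "(real n + 1) * exp (- p * real n * 1) = (c * (real n + 1)) * exp (- (p / 2) * real n) * exp (- (p / 2) * real n) / c"
    using c unfolding eq2 by (simp add: field_simps)
  also have "\<dots> \<le> exp (p / 2 * real n) * exp (- (p / 2) * real n) * exp (- (p / 2) * real n) / c"
    using * c by (intro divide_right_mono mult_right_mono) auto
  also have "\<dots> = (1 / c) * exp (- (p / 2)) ^ n" unfolding eq1 by (simp add: exp_add[symmetric])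
  finally show ?thesis .
qed



theorem lemma3p11:
  fixes \<Omega> :: "'o measure" and F :: "real \<Rightarrow> 'o measure"
    and P :: "'e::{heine_borel, second_countable_topology} \<Rightarrow> 'o measure"
    and X :: "real \<Rightarrow> 'o \<Rightarrow> 'e" and \<mu> :: "'e measure"
    and f g r :: "'e \<Rightarrow> real"
  assumes proc: "standard_markov \<Omega> F P X"
    and feller: "weak_feller P X"
    and erg: "ergodic P X \<mu>"
    and f_cont: "continuous_on UNIV f" and f_bdd: "bounded (range f)"
    and g_cont: "continuous_on UNIV g" and g_bdd: "bounded (range g)"
    and r_cont: "continuous_on UNIV r" and r_bdd: "bounded (range r)"
    and r_nonneg: "\<forall>y. r y \<ge> 0"
    and mu_f: "integral\<^sup>L \<mu> f < 0"
    and L_r: "\<forall>\<delta> \<epsilon> K. \<delta> > 0 \<and> \<epsilon> > 0 \<and> compact K \<longrightarrow>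
               (\<exists>N::nat. \<exists>p::real. N > 0 \<and> p > 0 \<and>
                 (\<forall>n::nat. \<forall>x\<in>K. n \<ge> N \<longrightarrow>
                    measure (P x) {\<omega> \<in> space (P x).
                       \<bar>(1 / (LINT s:{0..real n * \<delta>}|lborel. exp (- alpha r X \<omega> s))) *
                          (LINT s:{0..real n * \<delta>}|lborel. exp (- alpha r X \<omega> s) * f (X s \<omega>))
                        - integral\<^sup>L \<mu> f\<bar> > \<epsilon>}
                    \<le> exp (- p * real n * \<delta>)))"
  shows "\<exists>d :: 'e \<Rightarrow> real.
           (\<forall>x. d x < 0 \<and> gamma_r \<Omega> F P X r f (d x) x < \<infinity>) \<and>
           (\<forall>K. compact K \<longrightarrow>
              bounded ((\<lambda>x. (real_of_ereal (gamma_r \<Omega> F P X r f (d x) x) + 2 * supnorm g + 1) / (- d x)) ` K))"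
proof -
  from proc have filt: "filtration_on \<Omega> F"
    and Pxs: "\<And>x. prob_space (P x)" "\<And>x. sets (P x) = sets \<Omega>"
    and measF: "\<And>t. t \<ge> 0 \<Longrightarrow> X t \<in> measurable (F t) borel"
    and rc: "\<And>\<omega> t. \<omega> \<in> space \<Omega> \<Longrightarrow> t \<ge> 0 \<Longrightarrow> continuous (at_right t) (\<lambda>s. X s \<omega>)"
    unfolding standard_markov_def by auto
  have spP: "\<And>x. space (P x) = space \<Omega>" using Pxs(2) by (rule sets_eq_imp_space_eq)
  have spF: "\<And>t. t \<ge> 0 \<Longrightarrow> space (F t) = space \<Omega>" and setsF: "\<And>t. t \<ge> 0 \<Longrightarrow> sets (F t) \<subseteq> sets \<Omega>"
    using filt unfolding filtration_on_def by auto
  have measX: "X t \<in> borel_measurable \<Omega>" if "t \<ge> 0" for t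
    by (rule measurable_from_subalg[OF _ measF[OF that]]) (simp add: subalgebra_def spF setsF that)
  have XJ: "(\<lambda>(\<omega>,s). X (max 0 s) \<omega>) \<in> borel_measurable (\<Omega> \<Otimes>\<^sub>M lborel)"
    by (rule X_joint_meas[OF measX rc])
  define al where "al = (\<lambda>\<omega> s. (\<integral>u. indicator {0..s} u * r (X (max 0 u) \<omega>) \<partial>lborel))"
  note ms = meas_setup[OF XJ r_cont f_cont]
  have aleq: "\<And>\<omega> s. alpha r X \<omega> s = al \<omega> s" unfolding al_def using ms(1) by simp
  have fJ: "(\<lambda>z. f (X (max 0 (snd z)) (fst z))) \<in> borel_measurable (\<Omega> \<Otimes>\<^sub>M lborel)" by (rule ms(2))
  have alJ: "(\<lambda>z. al (fst z) (snd z)) \<in> borel_measurable (\<Omega> \<Otimes>\<^sub>M lborel)" unfolding al_def using ms(3) by simp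
  have al0: "al \<omega> s \<ge> 0" for \<omega> s
    unfolding al_def by (rule integral_nonneg_AE) (use r_nonneg in \<open>auto simp: indicator_def\<close>)
  obtain Cf where Cf: "\<And>y. \<bar>f y\<bar> \<le> Cf" using f_bdd unfolding bounded_iff by auto
  define mu where "mu = integral\<^sup>L \<mu> f"
  have mu: "mu < 0" using mu_f unfolding mu_def .
  note Lr = L_r[folded mu_def]
  define bad where "bad = (\<lambda>n::nat. {\<omega> \<in> space \<Omega>. \<bar>(1 / (LINT s:{0..real n * 1}|lborel. exp (- alpha r X \<omega> s))) *
                          (LINT s:{0..real n * 1}|lborel. exp (- alpha r X \<omega> s) * f (X s \<omega>)) - mu\<bar> > - mu / 2})"
  have bad_sets: "bad n \<in> sets \<Omega>" for n
  proof -
    define b where "b = real n * 1"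
    have A: "(LINT s:{0..b}|lborel. exp (- alpha r X \<omega> s)) = (\<integral>s. indicator {0..b} s * exp (- al (fst (\<omega>,s)) (snd (\<omega>,s))) \<partial>lborel)" for \<omega>
      unfolding set_lebesgue_integral_def by (simp add: aleq)
    have B: "(LINT s:{0..b}|lborel. exp (- alpha r X \<omega> s) * f (X s \<omega>)) =
       (\<integral>s. indicator {0..b} s * (exp (- al (fst (\<omega>,s)) (snd (\<omega>,s))) * f (X (max 0 (snd (\<omega>,s))) (fst (\<omega>,s)))) \<partial>lborel)" for \<omega>
      unfolding set_lebesgue_integral_def
      by (rule Bochner_Integration.integral_cong) (auto simp: indicator_def aleq)
    have mA: "(\<lambda>\<omega>. \<integral>s. indicator {0..b} s * exp (- al (fst (\<omega>,s)) (snd (\<omega>,s))) \<partial>lborel) \<in> borel_measurable \<Omega>"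
    proof (rule lborel.borel_measurable_lebesgue_integral)
      show "case_prod (\<lambda>\<omega> s. indicator {0..b} s * exp (- al (fst (\<omega>,s)) (snd (\<omega>,s)))) \<in> borel_measurable (\<Omega> \<Otimes>\<^sub>M lborel)"
        using alJ by (simp add: case_prod_beta') measurable
    qed
    have mB: "(\<lambda>\<omega>. \<integral>s. indicator {0..b} s * (exp (- al (fst (\<omega>,s)) (snd (\<omega>,s))) * f (X (max 0 (snd (\<omega>,s))) (fst (\<omega>,s)))) \<partial>lborel) \<in> borel_measurable \<Omega>"
    proof (rule lborel.borel_measurable_lebesgue_integral)
      show "case_prod (\<lambda>\<omega> s. indicator {0..b} s * (exp (- al (fst (\<omega>,s)) (snd (\<omega>,s))) * f (X (max 0 (snd (\<omega>,s))) (fst (\<omega>,s))))) \<in> borel_measurable (\<Omega> \<Otimes>\<^sub>M lborel)"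
        using alJ fJ by (simp add: case_prod_beta') measurable
    qed
    have "bad n = {\<omega> \<in> space \<Omega>. \<bar>(1 / (\<integral>s. indicator {0..b} s * exp (- al (fst (\<omega>,s)) (snd (\<omega>,s))) \<partial>lborel)) *
        (\<integral>s. indicator {0..b} s * (exp (- al (fst (\<omega>,s)) (snd (\<omega>,s))) * f (X (max 0 (snd (\<omega>,s))) (fst (\<omega>,s)))) \<partial>lborel) - mu\<bar> > - mu / 2}"
      unfolding bad_def b_def[symmetric] A B ..
    also have "\<dots> \<in> sets \<Omega>" using mA mB by measurable
    finally show ?thesis .
  qed
  define d where "d = mu / 2"
  define C where "C = Cf + \<bar>mu / 2\<bar>"
  have C0: "0 \<le> C" using Cf[of undefined] unfolding C_def by linarith
  define \<Gamma> where "\<Gamma> = (\<lambda>x. gamma_r \<Omega> F P X r f d x)"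
  have tau0: "stopping_time_inf \<Omega> F (\<lambda>_. 0)"
    unfolding stopping_time_inf_def
  proof (intro allI impI)
    fix t :: real assume t: "0 \<le> t"
    have "space (F t) \<in> sets (F t)" by (rule sets.top)
    then show "{\<omega> \<in> space \<Omega>. (0::ennreal) \<le> ennreal t} \<in> sets (F t)" using spF[OF t] by simp
  qed
  have gamma0: "0 \<le> \<Gamma> x" for x
  proof -
    have z: "(LINT s:{0..enn2real (min ((\<lambda>_. 0::ennreal) \<omega>) (ennreal T))}|lborel.
               exp (- alpha r X \<omega> s) * (f (X s \<omega>) - d)) = 0" for \<omega> T
    proof -
      have "min (0::ennreal) (ennreal T) = 0" by simp
      then have E: "{0..enn2real (min ((\<lambda>_. 0::ennreal) \<omega>) (ennreal T))} = {0}" by simp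
      have "AE s in lborel. indicator {0::real} s *\<^sub>R (exp (- alpha r X \<omega> s) * (f (X s \<omega>) - d)) = 0"
        using AE_lborel_singleton[of "0::real"] by eventually_elim simp
      then show ?thesis unfolding set_lebesgue_integral_def E by (rule integral_eq_zero_AE)
    qed
    have "0 = Limsup at_top (\<lambda>T::real. ereal (\<integral>\<omega>.
           (LINT s:{0..enn2real (min ((\<lambda>_. 0::ennreal) \<omega>) (ennreal T))}|lborel.
               exp (- alpha r X \<omega> s) * (f (X s \<omega>) - d)) \<partial>P x))"
      unfolding z by (simp add: Limsup_const)
    also have "\<dots> \<le> \<Gamma> x" unfolding \<Gamma>_def gamma_r_def
      by (rule SUP_upper[where f="\<lambda>\<tau>. Limsup at_top (\<lambda>T::real. ereal (\<integral>\<omega>.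
           (LINT s:{0..enn2real (min (\<tau> \<omega>) (ennreal T))}|lborel.
               exp (- alpha r X \<omega> s) * (f (X s \<omega>) - d)) \<partial>P x))"]) (use tau0 in simp)
    finally show ?thesis .
  qed
  have main: "\<exists>B. \<forall>x\<in>K. \<Gamma> x \<le> ereal B" if K: "compact K" for K
  proof -
    obtain N p where N: "N > 0" and p: "p > 0" and
      Pb: "\<And>n x. x \<in> K \<Longrightarrow> n \<ge> N \<Longrightarrow> measure (P x) (bad n) \<le> exp (- p * real n * 1)"
      using Lr[rule_format, of 1 "- mu / 2" K] K mu unfolding bad_def spP by auto
    define c where "c = min 1 (p / 2)"
    define q where "q = exp (- (p / 2))"
    have c: "c > 0" using p unfolding c_def by auto
    have summ: "summable (\<lambda>n. (1 / c) * q ^ n)"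
      unfolding q_def by (intro summable_mult summable_geometric) (use p in auto)
    define S where "S = (\<Sum>n. (1 / c) * q ^ n)"
    define B where "B = C * (real N + 1) + C * S"
    have EB: "(\<integral>\<omega>. (LINT s:{0..enn2real (min (\<tau> \<omega>) (ennreal T))}|lborel.
               exp (- alpha r X \<omega> s) * (f (X s \<omega>) - d)) \<partial>P x) \<le> B" if x: "x \<in> K" for x \<tau> T
    proof -
      interpret Px: prob_space "P x" by (rule Pxs(1))
      define m where "m = nat \<lfloor>max 0 T\<rfloor>"
      define G where "G = (\<lambda>\<omega>. C * (real N + 1) + C * (\<Sum>n\<in>{N..m}. (real n + 1) * indicator (bad n) \<omega>))"
      define Z where "Z = (\<lambda>\<omega>. (LINT s:{0..enn2real (min (\<tau> \<omega>) (ennreal T))}|lborel.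
               exp (- alpha r X \<omega> s) * (f (X s \<omega>) - d)))"
      have badP: "bad n \<in> sets (P x)" for n using bad_sets Pxs(2) by simp
      have ptw: "Z \<omega> \<le> G \<omega>" if om: "\<omega> \<in> space (P x)" for \<omega>
      proof -
        define t where "t = enn2real (min (\<tau> \<omega>) (ennreal T))"
        have t0: "0 \<le> t" unfolding t_def by simp
        have "t \<le> enn2real (ennreal T)" unfolding t_def by (rule enn2real_mono) auto
        also have "enn2real (ennreal T) = max 0 T" by (cases "T \<ge> 0") (auto simp: ennreal_neg)
        finally have "t \<le> max 0 T" .
        then have tm: "nat \<lfloor>t\<rfloor> \<le> m" unfolding m_def by (intro nat_mono floor_mono)
        have om': "\<omega> \<in> space \<Omega>" using om spP by simp
        show ?thesis
          using omega_bound[OF alJ fJ aleq al0 Cf mu om' t0 tm N bad_def]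
          unfolding Z_def G_def t_def C_def d_def .
      qed
      have intG: "integrable (P x) G" unfolding G_def
        by (intro Bochner_Integration.integrable_add Px.integrable_const
              Bochner_Integration.integrable_mult_right Bochner_Integration.integrable_sum
              integrable_real_indicator badP) (simp_all add: Px.emeasure_finite less_top[symmetric])
      have "integral\<^sup>L (P x) Z \<le> integral\<^sup>L (P x) G"
      proof (cases "integrable (P x) Z")
        case True
        then show ?thesis using intG ptw by (intro integral_mono) auto
      next
        case False
        then have "integral\<^sup>L (P x) Z = 0" by (rule not_integrable_integral_eq)
        also have "0 \<le> integral\<^sup>L (P x) G" unfolding G_def
          by (rule integral_nonneg_AE, rule AE_I2)
             (intro add_nonneg_nonneg mult_nonneg_nonneg sum_nonneg C0; simp)
        finally show ?thesis .
      qed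
      also have "integral\<^sup>L (P x) G = C * (real N + 1) + C * (\<Sum>n\<in>{N..m}. (real n + 1) * measure (P x) (bad n))"
      proof -
        have ii: "integral\<^sup>L (P x) (indicator (bad n)) = measure (P x) (bad n)" for n
          using sets.sets_into_space[OF badP[of n]] by (simp add: Int_absorb2)
        have ind: "integrable (P x) (indicator (bad n) :: _ \<Rightarrow> real)" for n
          by (rule integrable_real_indicator[OF badP]) (simp add: Px.emeasure_finite less_top[symmetric])
        have i1: "integrable (P x) (\<lambda>\<omega>. \<Sum>n\<in>{N..m}. (real n + 1) * indicator (bad n) \<omega>)"
          by (intro Bochner_Integration.integrable_sum Bochner_Integration.integrable_mult_right ind)
        have e1: "integral\<^sup>L (P x) (\<lambda>\<omega>. \<Sum>n\<in>{N..m}. (real n + 1) * indicator (bad n) \<omega>)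
            = (\<Sum>n\<in>{N..m}. (real n + 1) * integral\<^sup>L (P x) (indicator (bad n)))"
          by (subst Bochner_Integration.integral_sum) (auto intro!: Bochner_Integration.integrable_mult_right ind)
        have "integral\<^sup>L (P x) G = integral\<^sup>L (P x) (\<lambda>\<omega>. C * (real N + 1)) +
              integral\<^sup>L (P x) (\<lambda>\<omega>. C * (\<Sum>n\<in>{N..m}. (real n + 1) * indicator (bad n) \<omega>))"
          unfolding G_def
          by (rule Bochner_Integration.integral_add[OF Px.integrable_const Bochner_Integration.integrable_mult_right[OF i1]])
        also have "\<dots> = C * (real N + 1) + C * (\<Sum>n\<in>{N..m}. (real n + 1) * integral\<^sup>L (P x) (indicator (bad n)))"
          by (simp only: integral_mult_right_zero e1 lebesgue_integral_const Px.prob_space) simp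
        finally have "integral\<^sup>L (P x) G = C * (real N + 1) + C * (\<Sum>n\<in>{N..m}. (real n + 1) * integral\<^sup>L (P x) (indicator (bad n)))" .
        then show ?thesis unfolding ii .
      qed
      also have "\<dots> \<le> C * (real N + 1) + C * S"
      proof -
        have "(\<Sum>n\<in>{N..m}. (real n + 1) * measure (P x) (bad n)) \<le> (\<Sum>n\<in>{N..m}. (1 / c) * q ^ n)"
        proof (rule sum_mono)
          fix n assume n: "n \<in> {N..m}"
          have "(real n + 1) * measure (P x) (bad n) \<le> (real n + 1) * exp (- p * real n * 1)"
            using Pb[OF x] n by (intro mult_left_mono) auto
          also have "\<dots> \<le> (1 / c) * q ^ n" unfolding c_def q_def by (rule geo_bound[OF p])
          finally show "(real n + 1) * measure (P x) (bad n) \<le> (1 / c) * q ^ n" .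
        qed
        also have "\<dots> \<le> S" unfolding S_def
          by (rule sum_le_suminf[OF summ]) (use c in \<open>auto simp: q_def\<close>)
        finally show ?thesis using C0 by (simp add: mult_left_mono)
      qed
      finally show ?thesis unfolding Z_def B_def .
    qed
    show ?thesis
    proof (intro exI ballI)
      fix x assume x: "x \<in> K"
      show "\<Gamma> x \<le> ereal B" unfolding \<Gamma>_def gamma_r_def
      proof (rule SUP_least)
        fix \<tau> show "Limsup at_top (\<lambda>T::real. ereal (\<integral>\<omega>.
           (LINT s:{0..enn2real (min (\<tau> \<omega>) (ennreal T))}|lborel.
               exp (- alpha r X \<omega> s) * (f (X s \<omega>) - d)) \<partial>P x)) \<le> ereal B"
          by (rule Limsup_bounded, rule always_eventually) (use EB[OF x] in simp)
      qed
    qed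
  qed
  show ?thesis
  proof (intro exI[of _ "\<lambda>_. d"] conjI allI impI)
    fix x
    show "d < 0" using mu unfolding d_def by simp
    obtain B where "\<forall>x'\<in>{x}. \<Gamma> x' \<le> ereal B" using main[of "{x}"] by auto
    then show "gamma_r \<Omega> F P X r f d x < \<infinity>" unfolding \<Gamma>_def by (auto intro: le_less_trans)
  next
    fix K :: "'e set" assume K: "compact K"
    obtain B where B: "\<forall>x\<in>K. \<Gamma> x \<le> ereal B" using main[OF K] by auto
    define D where "D = (\<bar>B\<bar> + \<bar>2 * supnorm g + 1\<bar>) / (- d)"
    show "bounded ((\<lambda>x. (real_of_ereal (gamma_r \<Omega> F P X r f d x) + 2 * supnorm g + 1) / (- d)) ` K)"
      unfolding bounded_iff
    proof (intro exI ballI)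
      fix y assume "y \<in> (\<lambda>x. (real_of_ereal (gamma_r \<Omega> F P X r f d x) + 2 * supnorm g + 1) / (- d)) ` K"
      then obtain x where x: "x \<in> K" and y: "y = (real_of_ereal (\<Gamma> x) + 2 * supnorm g + 1) / (- d)"
        unfolding \<Gamma>_def by auto
      have dn: "- d > 0" using mu unfolding d_def by simp
      have g0: "0 \<le> real_of_ereal (\<Gamma> x)" using gamma0[of x] by (simp add: real_of_ereal_pos)
      have gB: "real_of_ereal (\<Gamma> x) \<le> \<bar>B\<bar>"
        using B x gamma0[of x] by (cases "\<Gamma> x") auto
      have "\<bar>real_of_ereal (\<Gamma> x) + 2 * supnorm g + 1\<bar> \<le> \<bar>B\<bar> + \<bar>2 * supnorm g + 1\<bar>"
        using g0 gB by linarith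
      then have "\<bar>real_of_ereal (\<Gamma> x) + 2 * supnorm g + 1\<bar> / (- d) \<le> (\<bar>B\<bar> + \<bar>2 * supnorm g + 1\<bar>) / (- d)"
        using dn by (intro divide_right_mono) auto
      then show "norm y \<le> D" unfolding y D_def using dn by simp
    qed
  qed
qed


end
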